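(* Let $G=G_+G_-$ be a unique factorization of a finite group $G$, let $\xi,\eta:G_+\to G_-$ be maps and $r:G_+\times G_+\to\mathbb R_{>0}$ a function such that \[ R=\sum_{u,v\in G_+} r(u,v)\,\{u(\eta(v)^{u})^{-1}\}\otimes\{v\,\xi(u)\} \] is a positive quasi-triangular structure on $H(G;G_+,G_-)$. Then $r(u,v)=1$ for all $u,v\in G_+$.
   Context: A unique factorization $G=G_+G_-$ consists of subgroups $G_+,G_-$ such that every $g\in G$ is uniquely $g=g_+g_-$ with $g_+\in G_+$, $g_-\in G_-$. For $u\in G_+$, $x\in G_-$ define ${}^u x\in G_-$, $u^x\in G_+$, ${}^x u\in G_+$, $x^u\in G_-$ by $ux=({}^u x)(u^x)$ and $xu=({}^x u)(x^u)$. $H(G;G_+,G_-)$ is the complex vector space with basis $\{g\}$, $g\in G$, and Hopf algebra structure: $\{g\}\{h\}=\delta_{g_+^{\,g_-},\,h_+}\{g h_-\}$; unit $1=\sum_{u\in G_+}\{u\}$; $\Delta\{g\}=\sum_{h\in G_+}\{g_+h^{-1}({}^{h}g_-)\}\otimes\{h g_-\}$; $\varepsilon\{g\}=\delta_{g_+,e}$; $S\{g\}=\{g^{-1}\}$. A quasi-triangular structure on a Hopf algebra $H$ is an invertible $R\in H\otimes H$ with $\tau\Delta(a)=R\Delta(a)R^{-1}$ for all $a$ ($\tau$ the flip), $(\Delta\otimes\mathrm{id})R=R_{13}R_{23}$, $(\mathrm{id}\otimes\Delta)R=R_{13}R_{12}$, and $(\varepsilon\otimes\mathrm{id})R=(\mathrm{id}\otimes\varepsilon)R=1$.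 An element of $H(G;G_+,G_-)^{\otimes 2}$ is positive if it is a linear combination of the $\{g\}\otimes\{h\}$ with non-negative real coefficients. *)

theory Defs
  imports "HOL-Algebra.Group" Complex_Main
begin

definition unique_factorization :: "('a,'b) monoid_scheme \<Rightarrow> 'a set \<Rightarrow> 'a set \<Rightarrow> bool" where
  "unique_factorization G Gp Gm \<longleftrightarrow> subgroup Gp G \<and> subgroup Gm G \<and>
     (\<forall>g\<in>carrier G. \<exists>!p. fst p \<in> Gp \<and> snd p \<in> Gm \<and> g = fst p \<otimes>\<^bsub>G\<^esub> snd p)"

definition fp :: "('a,'b) monoid_scheme \<Rightarrow> 'a set \<Rightarrow> 'a set \<Rightarrow> 'a \<Rightarrow> 'a" where
  "fp G Gp Gm g = (THE u. u \<in> Gp \<and> (\<exists>x\<in>Gm. g = u \<otimes>\<^bsub>G\<^esub> x))"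
definition fm :: "('a,'b) monoid_scheme \<Rightarrow> 'a set \<Rightarrow> 'a set \<Rightarrow> 'a \<Rightarrow> 'a" where
  "fm G Gp Gm g = (THE x. x \<in> Gm \<and> (\<exists>u\<in>Gp. g = u \<otimes>\<^bsub>G\<^esub> x))"
definition gm :: "('a,'b) monoid_scheme \<Rightarrow> 'a set \<Rightarrow> 'a set \<Rightarrow> 'a \<Rightarrow> 'a" where
  "gm G Gp Gm g = (THE x. x \<in> Gm \<and> (\<exists>u\<in>Gp. g = x \<otimes>\<^bsub>G\<^esub> u))"
definition gp :: "('a,'b) monoid_scheme \<Rightarrow> 'a set \<Rightarrow> 'a set \<Rightarrow> 'a \<Rightarrow> 'a" where
  "gp G Gp Gm g = (THE u. u \<in> Gp \<and> (\<exists>x\<in>Gm. g = x \<otimes>\<^bsub>G\<^esub> u))"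

(* Actions: u x = (^u x)(u^x) and x u = (^x u)(x^u), for u in G+, x in G- *)
definition lact_pm where "lact_pm G Gp Gm u x = gm G Gp Gm (u \<otimes>\<^bsub>G\<^esub> x)"
definition ract_pm where "ract_pm G Gp Gm u x = gp G Gp Gm (u \<otimes>\<^bsub>G\<^esub> x)"
definition lact_mp where "lact_mp G Gp Gm x u = fp G Gp Gm (x \<otimes>\<^bsub>G\<^esub> u)"
definition ract_mp where "ract_mp G Gp Gm x u = fm G Gp Gm (x \<otimes>\<^bsub>G\<^esub> u)"

text \<open>Elements of H(G;G+,G-) are coefficient functions 'a \<Rightarrow> complex (on the basis {g}, g in carrier G);
  elements of H\<otimes>H and H\<otimes>H\<otimes>H are coefficient functions on pairs / triples.\<close>

text \<open>Structure constants: coefficient of {k} in {g}{h}.\<close>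
definition mcoef :: "('a,'b) monoid_scheme \<Rightarrow> 'a set \<Rightarrow> 'a set \<Rightarrow> 'a \<Rightarrow> 'a \<Rightarrow> 'a \<Rightarrow> complex" where
  "mcoef G Gp Gm g h k =
     (if ract_pm G Gp Gm (fp G Gp Gm g) (fm G Gp Gm g) = fp G Gp Gm h
         \<and> k = g \<otimes>\<^bsub>G\<^esub> fm G Gp Gm h then 1 else 0)"

text \<open>Coefficient of {k1}\<otimes>{k2} in \<Delta>{g}.\<close>
definition dcoef :: "('a,'b) monoid_scheme \<Rightarrow> 'a set \<Rightarrow> 'a set \<Rightarrow> 'a \<Rightarrow> 'a \<Rightarrow> 'a \<Rightarrow> complex" where
  "dcoef G Gp Gm g k1 k2 = (\<Sum>h\<in>Gp.
     (if k1 = fp G Gp Gm g \<otimes>\<^bsub>G\<^esub> inv\<^bsub>G\<^esub> h \<otimes>\<^bsub>G\<^esub> lact_pm G Gp Gm h (fm G Gp Gm g)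
         \<and> k2 = h \<otimes>\<^bsub>G\<^esub> fm G Gp Gm g then 1 else 0))"

definition hcounit :: "('a,'b) monoid_scheme \<Rightarrow> 'a set \<Rightarrow> 'a set \<Rightarrow> 'a \<Rightarrow> complex" where
  "hcounit G Gp Gm g = (if fp G Gp Gm g = \<one>\<^bsub>G\<^esub> then 1 else 0)"

definition hunit :: "'a set \<Rightarrow> 'a \<Rightarrow> complex" where
  "hunit Gp k = (if k \<in> Gp then 1 else 0)"

definition btens2 :: "'a \<Rightarrow> 'a \<Rightarrow> 'a \<times> 'a \<Rightarrow> complex" where
  "btens2 a b = (\<lambda>k. if k = (a, b) then 1 else 0)"

definition mul2 :: "('a,'b) monoid_scheme \<Rightarrow> 'a set \<Rightarrow> 'a set \<Rightarrow> ('a \<times> 'a \<Rightarrow> complex) \<Rightarrow> ('a \<times> 'a \<Rightarrow> complex) \<Rightarrow> 'a \<times> 'a \<Rightarrow> complex" where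
  "mul2 G Gp Gm X Y = (\<lambda>(k1,k2). \<Sum>g1\<in>carrier G. \<Sum>g2\<in>carrier G. \<Sum>h1\<in>carrier G. \<Sum>h2\<in>carrier G.
      X (g1,g2) * Y (h1,h2) * mcoef G Gp Gm g1 h1 k1 * mcoef G Gp Gm g2 h2 k2)"

definition mul3 :: "('a,'b) monoid_scheme \<Rightarrow> 'a set \<Rightarrow> 'a set \<Rightarrow> ('a \<times> 'a \<times> 'a \<Rightarrow> complex) \<Rightarrow> ('a \<times> 'a \<times> 'a \<Rightarrow> complex) \<Rightarrow> 'a \<times> 'a \<times> 'a \<Rightarrow> complex" where
  "mul3 G Gp Gm X Y = (\<lambda>(k1,k2,k3). \<Sum>g1\<in>carrier G. \<Sum>g2\<in>carrier G. \<Sum>g3\<in>carrier G.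
      \<Sum>h1\<in>carrier G. \<Sum>h2\<in>carrier G. \<Sum>h3\<in>carrier G.
      X (g1,g2,g3) * Y (h1,h2,h3) * mcoef G Gp Gm g1 h1 k1 * mcoef G Gp Gm g2 h2 k2 * mcoef G Gp Gm g3 h3 k3)"

definition hcomult :: "('a,'b) monoid_scheme \<Rightarrow> 'a set \<Rightarrow> 'a set \<Rightarrow> ('a \<Rightarrow> complex) \<Rightarrow> 'a \<times> 'a \<Rightarrow> complex" where
  "hcomult G Gp Gm a = (\<lambda>(k1,k2). \<Sum>g\<in>carrier G. a g * dcoef G Gp Gm g k1 k2)"

definition quasi_triangular :: "('a,'b) monoid_scheme \<Rightarrow> 'a set \<Rightarrow> 'a set \<Rightarrow> ('a \<times> 'a \<Rightarrow> complex) \<Rightarrow> bool" where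
  "quasi_triangular G Gp Gm R \<longleftrightarrow>
     (\<forall>k1 k2. (k1 \<notin> carrier G \<or> k2 \<notin> carrier G) \<longrightarrow> R (k1,k2) = 0) \<and>
     (\<exists>Rinv. (\<forall>k1 k2. (k1 \<notin> carrier G \<or> k2 \<notin> carrier G) \<longrightarrow> Rinv (k1,k2) = 0) \<and>
        mul2 G Gp Gm R Rinv = (\<lambda>(k1,k2). hunit Gp k1 * hunit Gp k2) \<and>
        mul2 G Gp Gm Rinv R = (\<lambda>(k1,k2). hunit Gp k1 * hunit Gp k2) \<and>
        (\<forall>a. (\<forall>g. g \<notin> carrier G \<longrightarrow> a g = 0) \<longrightarrow>
           (\<lambda>(k1,k2). hcomult G Gp Gm a (k2,k1)) = mul2 G Gp Gm (mul2 G Gp Gm R (hcomult G Gp Gm a)) Rinv)) \<and>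
     (\<lambda>(k1,k2,k3). \<Sum>g\<in>carrier G. R (g,k3) * dcoef G Gp Gm g k1 k2)
        = mul3 G Gp Gm (\<lambda>(k1,k2,k3). R (k1,k3) * hunit Gp k2) (\<lambda>(k1,k2,k3). hunit Gp k1 * R (k2,k3)) \<and>
     (\<lambda>(k1,k2,k3). \<Sum>g\<in>carrier G. R (k1,g) * dcoef G Gp Gm g k2 k3)
        = mul3 G Gp Gm (\<lambda>(k1,k2,k3). R (k1,k3) * hunit Gp k2) (\<lambda>(k1,k2,k3). R (k1,k2) * hunit Gp k3) \<and>
     (\<lambda>k. \<Sum>g\<in>carrier G. hcounit G Gp Gm g * R (g,k)) = hunit Gp \<and>
     (\<lambda>k. \<Sum>g\<in>carrier G. R (k,g) * hcounit G Gp Gm g) = hunit Gp"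

definition positive2 :: "('a \<times> 'a \<Rightarrow> complex) \<Rightarrow> bool" where
  "positive2 X \<longleftrightarrow> (\<forall>k. Im (X k) = 0 \<and> Re (X k) \<ge> 0)"

end

theory Submission
  imports Defs
begin


lemma sum_single:
  assumes "finite S" "a \<in> S" "\<And>x. x \<in> S \<Longrightarrow> x \<noteq> a \<Longrightarrow> f x = 0"
  shows "sum f S = f a"
proof -
  have "sum f S = sum f {a}"
    using assms by (intro sum.mono_neutral_right) auto
  then show ?thesis by simp
qed

locale ufac = group G for G :: "('a,'b) monoid_scheme" (structure) +
  fixes P M :: "'a set"
  assumes uf: "unique_factorization G P M"
begin

lemma P_sub: "subgroup P G" and M_sub: "subgroup M G"
  using uf unfolding unique_factorization_def by auto

lemma P_car: "x \<in> P \<Longrightarrow> x \<in> carrier G" using subgroup.subset[OF P_sub] by blast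
lemma M_car: "x \<in> M \<Longrightarrow> x \<in> carrier G" using subgroup.subset[OF M_sub] by blast
lemma P_one: "\<one> \<in> P" by (rule subgroup.one_closed[OF P_sub])
lemma M_one: "\<one> \<in> M" by (rule subgroup.one_closed[OF M_sub])
lemma P_mult: "x \<in> P \<Longrightarrow> y \<in> P \<Longrightarrow> x \<otimes> y \<in> P" by (rule subgroup.m_closed[OF P_sub])
lemma M_mult: "x \<in> M \<Longrightarrow> y \<in> M \<Longrightarrow> x \<otimes> y \<in> M" by (rule subgroup.m_closed[OF M_sub])
lemma P_inv: "x \<in> P \<Longrightarrow> inv x \<in> P" by (rule subgroup.m_inv_closed[OF P_sub])
lemma M_inv: "x \<in> M \<Longrightarrow> inv x \<in> M" by (rule subgroup.m_inv_closed[OF M_sub])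

lemma fac_ex: "g \<in> carrier G \<Longrightarrow> \<exists>p\<in>P. \<exists>m\<in>M. g = p \<otimes> m"
  using uf unfolding unique_factorization_def by (metis (no_types, lifting) prod.collapse)

lemma fac_uniq:
  assumes "p \<in> P" "p' \<in> P" "m \<in> M" "m' \<in> M" "p \<otimes> m = p' \<otimes> m'"
  shows "p = p' \<and> m = m'"
proof -
  have g: "p \<otimes> m \<in> carrier G" using assms P_car M_car by blast
  have "\<exists>!q. fst q \<in> P \<and> snd q \<in> M \<and> p \<otimes> m = fst q \<otimes> snd q"
    using uf g unfolding unique_factorization_def by blast
  then have "(p,m) = (p',m')" using assms by (metis fst_conv snd_conv)
  then show ?thesis by simp
qed

lemma PM_int: assumes a: "z \<in> P" "z \<in> M" shows "z = \<one>"
proof -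
  have zc: "z \<in> carrier G" using P_car[OF a(1)] .
  have "z \<otimes> \<one> = \<one> \<otimes> z" using r_one[OF zc] l_one[OF zc] by (rule trans[OF _ sym])
  then have "z = \<one> \<and> \<one> = z" by (rule fac_uniq[OF a(1) P_one M_one a(2)])
  then show ?thesis by (rule conjunct1)
qed

lemma fp_eq: assumes a1: "p \<in> P" and a2: "m \<in> M" shows "fp G P M (p \<otimes> m) = p"
  unfolding fp_def
proof (rule the_equality)
  show "p \<in> P \<and> (\<exists>x\<in>M. p \<otimes> m = p \<otimes> x)" using a1 a2 by blast
next
  fix y assume "y \<in> P \<and> (\<exists>x\<in>M. p \<otimes> m = y \<otimes> x)"
  then obtain z where z: "y \<in> P" "z \<in> M" "y \<otimes> z = p \<otimes> m" by auto
  show "y = p" using fac_uniq[OF z(1) a1 z(2) a2 z(3)] by simp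
qed
lemma fm_eq: assumes a1: "p \<in> P" and a2: "m \<in> M" shows "fm G P M (p \<otimes> m) = m"
  unfolding fm_def
proof (rule the_equality)
  show "m \<in> M \<and> (\<exists>u\<in>P. p \<otimes> m = u \<otimes> m)" using a1 a2 by blast
next
  fix y assume "y \<in> M \<and> (\<exists>u\<in>P. p \<otimes> m = u \<otimes> y)"
  then obtain z where z: "z \<in> P" "y \<in> M" "z \<otimes> y = p \<otimes> m" by auto
  show "y = m" using fac_uniq[OF z(1) a1 z(2) a2 z(3)] by simp
qed

lemma fac_obt:
  assumes "g \<in> carrier G"
  obtains p m where "p \<in> P" "m \<in> M" "g = p \<otimes> m"
  using fac_ex[OF assms] by blast

lemma fp_in: assumes "g \<in> carrier G" shows "fp G P M g \<in> P"
proof -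
  obtain p m where pm: "p \<in> P" "m \<in> M" "g = p \<otimes> m" using fac_obt[OF assms] .
  show ?thesis using fp_eq[OF pm(1,2)] pm by simp
qed
lemma fm_in: assumes "g \<in> carrier G" shows "fm G P M g \<in> M"
proof -
  obtain p m where pm: "p \<in> P" "m \<in> M" "g = p \<otimes> m" using fac_obt[OF assms] .
  show ?thesis using fm_eq[OF pm(1,2)] pm by simp
qed
lemma fpm: assumes "g \<in> carrier G" shows "fp G P M g \<otimes> fm G P M g = g"
proof -
  obtain p m where pm: "p \<in> P" "m \<in> M" "g = p \<otimes> m" using fac_obt[OF assms] .
  show ?thesis using fm_eq[OF pm(1,2)] fp_eq[OF pm(1,2)] pm by simp
qed

lemma fp_P: assumes "p \<in> P" shows "fp G P M p = p"
  using fp_eq[OF assms M_one] P_car[OF assms] by simp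
lemma fm_P: assumes "p \<in> P" shows "fm G P M p = \<one>"
  using fm_eq[OF assms M_one] P_car[OF assms] by simp

lemma mp_ex: assumes g: "g \<in> carrier G" shows "\<exists>m\<in>M. \<exists>p\<in>P. g = m \<otimes> p"
proof -
  obtain p m where pm: "p \<in> P" "m \<in> M" "inv g = p \<otimes> m" using fac_obt[of "inv g"] g by auto
  have c: "p \<in> carrier G" "m \<in> carrier G" using pm P_car M_car by auto
  have "g = inv (inv g)" using g by simp
  also have "\<dots> = inv m \<otimes> inv p" using pm(3) c by (simp add: inv_mult_group)
  finally have "g = inv m \<otimes> inv p" .
  moreover have "inv m \<in> M" "inv p \<in> P" using M_inv[OF pm(2)] P_inv[OF pm(1)] by auto
  ultimately show ?thesis by blast
qed

lemma mp_uniq: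
  assumes a: "p \<in> P" "p' \<in> P" "m \<in> M" "m' \<in> M" and e: "m \<otimes> p = m' \<otimes> p'"
  shows "p = p' \<and> m = m'"
proof -
  have c: "p \<in> carrier G" "p' \<in> carrier G" "m \<in> carrier G" "m' \<in> carrier G"
    using a P_car M_car by auto
  have "inv m' \<otimes> m \<otimes> p = inv m' \<otimes> (m \<otimes> p)" using c by (simp add: m_assoc)
  also have "\<dots> = inv m' \<otimes> (m' \<otimes> p')" using e by simp
  also have "\<dots> = p'" using c by (simp add: m_assoc[symmetric])
  finally have "inv m' \<otimes> m \<otimes> p = p'" .
  then have e2: "inv m' \<otimes> m = p' \<otimes> inv p"
    using c by (simp add: inv_solve_right)
  have "inv m' \<otimes> m \<in> M" using M_mult[OF M_inv[OF a(4)] a(3)] .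
  moreover have "p' \<otimes> inv p \<in> P" using P_mult[OF a(2) P_inv[OF a(1)]] .
  ultimately have z: "inv m' \<otimes> m = \<one>" "p' \<otimes> inv p = \<one>" using PM_int e2 by auto
  have "m = m'" using z(1) c by (metis inv_closed inv_inv inv_equality)
  moreover have "p = p'" using z(2) c by (metis inv_closed inv_inv inv_equality)
  ultimately show ?thesis by simp
qed

lemma gp_eq: assumes a2: "m \<in> M" and a1: "p \<in> P" shows "gp G P M (m \<otimes> p) = p"
  unfolding gp_def
proof (rule the_equality)
  show "p \<in> P \<and> (\<exists>x\<in>M. m \<otimes> p = x \<otimes> p)" using a1 a2 by blast
next
  fix y assume "y \<in> P \<and> (\<exists>x\<in>M. m \<otimes> p = x \<otimes> y)"
  then obtain z where z: "y \<in> P" "z \<in> M" "z \<otimes> y = m \<otimes> p" by auto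
  show "y = p" using mp_uniq[OF z(1) a1 z(2) a2 z(3)] by simp
qed
lemma gm_eq: assumes a2: "m \<in> M" and a1: "p \<in> P" shows "gm G P M (m \<otimes> p) = m"
  unfolding gm_def
proof (rule the_equality)
  show "m \<in> M \<and> (\<exists>u\<in>P. m \<otimes> p = m \<otimes> u)" using a1 a2 by blast
next
  fix y assume "y \<in> M \<and> (\<exists>u\<in>P. m \<otimes> p = y \<otimes> u)"
  then obtain z where z: "z \<in> P" "y \<in> M" "y \<otimes> z = m \<otimes> p" by auto
  show "y = m" using mp_uniq[OF z(1) a1 z(2) a2 z(3)] by simp
qed
lemma gp_in: assumes "g \<in> carrier G" shows "gp G P M g \<in> P"
proof -
  obtain m p where mp: "m \<in> M" "p \<in> P" "g = m \<otimes> p" using mp_ex[OF assms] by blast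
  show ?thesis using gp_eq[OF mp(1,2)] mp by simp
qed
lemma gm_in: assumes "g \<in> carrier G" shows "gm G P M g \<in> M"
proof -
  obtain m p where mp: "m \<in> M" "p \<in> P" "g = m \<otimes> p" using mp_ex[OF assms] by blast
  show ?thesis using gm_eq[OF mp(1,2)] mp by simp
qed
lemma gp_P: assumes "p \<in> P" shows "gp G P M p = p"
  using gp_eq[OF M_one assms] P_car[OF assms] by simp

end

context ufac begin
lemma gmp: "g \<in> carrier G \<Longrightarrow> gm G P M g \<otimes> gp G P M g = g"
  using mp_ex gm_eq gp_eq by metis
lemma ract_pm_in: "v \<in> P \<Longrightarrow> x \<in> M \<Longrightarrow> ract_pm G P M v x \<in> P"
  unfolding ract_pm_def using gp_in P_car M_car by blast
lemma lact_pm_in: "v \<in> P \<Longrightarrow> x \<in> M \<Longrightarrow> lact_pm G P M v x \<in> M"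
  unfolding lact_pm_def using gm_in P_car M_car by blast
lemma ract_mp_in: "x \<in> M \<Longrightarrow> v \<in> P \<Longrightarrow> ract_mp G P M x v \<in> M"
  unfolding ract_mp_def using fm_in P_car M_car by blast
lemma ract_pm_one: "v \<in> P \<Longrightarrow> ract_pm G P M v \<one> = v"
  unfolding ract_pm_def using gp_P P_car by simp

lemma ract_pm_inj: "x \<in> M \<Longrightarrow> inj_on (\<lambda>v. ract_pm G P M v x) P"
proof (rule inj_onI)
  fix v v' assume x: "x \<in> M" and v: "v \<in> P" "v' \<in> P" and e: "ract_pm G P M v x = ract_pm G P M v' x"
  define p where "p = gp G P M (v \<otimes> x)"
  define m1 where "m1 = gm G P M (v \<otimes> x)"
  define m2 where "m2 = gm G P M (v' \<otimes> x)"
  have c: "v \<in> carrier G" "v' \<in> carrier G" "x \<in> carrier G" using v x P_car M_car by auto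
  have p: "p \<in> P" "p = gp G P M (v' \<otimes> x)" using e c gp_in unfolding p_def ract_pm_def by auto
  have m: "m1 \<in> M" "m2 \<in> M" using c gm_in unfolding m1_def m2_def by auto
  have e1: "m1 \<otimes> p = v \<otimes> x" using gmp c unfolding m1_def p_def by simp
  have e2: "m2 \<otimes> p = v' \<otimes> x" using gmp c p(2) unfolding m2_def by simp
  have mc: "m1 \<in> carrier G" "m2 \<in> carrier G" "p \<in> carrier G" using m p M_car P_car by auto
  have gen: "inv a \<otimes> b = p \<otimes> inv x" if "a \<otimes> p = b \<otimes> x" "a \<in> carrier G" "b \<in> carrier G" for a b
  proof -
    have "inv a \<otimes> b = inv a \<otimes> (b \<otimes> x) \<otimes> inv x" using that c by (simp add: m_assoc)
    also have "\<dots> = inv a \<otimes> (a \<otimes> p) \<otimes> inv x" using that by simp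
    also have "\<dots> = p \<otimes> inv x" using that(2) mc c by (simp add: m_assoc[symmetric])
    finally show ?thesis .
  qed
  have "inv m1 \<otimes> v = p \<otimes> inv x" using gen[OF e1 mc(1) c(1)] .
  moreover have "inv m2 \<otimes> v' = p \<otimes> inv x" using gen[OF e2 mc(2) c(2)] .
  ultimately have "inv m1 \<otimes> v = inv m2 \<otimes> v'" by simp
  then show "v = v'" using mp_uniq[OF v M_inv[OF m(1)] M_inv[OF m(2)]] by blast
qed
end

locale rsetup = ufac +
  fixes \<xi> \<eta> :: "'a \<Rightarrow> 'a" and r :: "'a \<Rightarrow> 'a \<Rightarrow> real" and R :: "'a \<times> 'a \<Rightarrow> complex"
  assumes fin: "finite (carrier G)"
    and xi: "\<forall>u\<in>P. \<xi> u \<in> M" and eta: "\<forall>u\<in>P. \<eta> u \<in> M"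
    and rpos: "\<forall>u\<in>P. \<forall>v\<in>P. r u v > 0"
    and Rdef: "R = (\<lambda>k. \<Sum>u\<in>P. \<Sum>v\<in>P. complex_of_real (r u v) *
            btens2 (u \<otimes> inv (ract_mp G P M (\<eta> v) u)) (v \<otimes> \<xi> u) k)"
begin

definition "am u v = inv (ract_mp G P M (\<eta> v) u)"
definition "A u v = u \<otimes> am u v"
definition "B u v = v \<otimes> \<xi> u"

lemma finP: "finite P" using fin P_car by (meson finite_subset subsetI)

lemma am_in: "u \<in> P \<Longrightarrow> v \<in> P \<Longrightarrow> am u v \<in> M"
  unfolding am_def using M_inv ract_mp_in eta by blast
lemma xi_in: "u \<in> P \<Longrightarrow> \<xi> u \<in> M" using xi by blast
lemma A_car: "u \<in> P \<Longrightarrow> v \<in> P \<Longrightarrow> A u v \<in> carrier G"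
  unfolding A_def using am_in P_car M_car by blast
lemma B_car: "u \<in> P \<Longrightarrow> v \<in> P \<Longrightarrow> B u v \<in> carrier G"
  unfolding B_def using xi_in P_car M_car by blast
lemma fp_A: "u \<in> P \<Longrightarrow> v \<in> P \<Longrightarrow> fp G P M (A u v) = u"
  unfolding A_def using am_in fp_eq by blast
lemma fm_A: "u \<in> P \<Longrightarrow> v \<in> P \<Longrightarrow> fm G P M (A u v) = am u v"
  unfolding A_def using am_in fm_eq by blast
lemma fp_B: "u \<in> P \<Longrightarrow> v \<in> P \<Longrightarrow> fp G P M (B u v) = v"
  unfolding B_def using xi_in fp_eq by blast
lemma fm_B: "u \<in> P \<Longrightarrow> v \<in> P \<Longrightarrow> fm G P M (B u v) = \<xi> u"
  unfolding B_def using xi_in fm_eq by blast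

lemma R_expand: "R k = (\<Sum>u\<in>P. \<Sum>v\<in>P. complex_of_real (r u v) * btens2 (A u v) (B u v) k)"
  unfolding Rdef A_def B_def am_def by simp

lemma R_val: assumes "u \<in> P" "v \<in> P" shows "R (A u v, B u v) = complex_of_real (r u v)"
proof -
  have "R (A u v, B u v) = (\<Sum>v'\<in>P. complex_of_real (r u v') * btens2 (A u v') (B u v') (A u v, B u v))"
    unfolding R_expand
  proof (rule sum_single[OF finP assms(1)])
    fix x assume x: "x \<in> P" "x \<noteq> u"
    show "(\<Sum>v'\<in>P. complex_of_real (r x v') * btens2 (A x v') (B x v') (A u v, B u v)) = 0"
    proof (intro sum.neutral ballI)
      fix v' assume v': "v' \<in> P"
      have "A x v' \<noteq> A u v" using fp_A[OF x(1) v'] fp_A[OF assms] x(2) by metis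
      then show "complex_of_real (r x v') * btens2 (A x v') (B x v') (A u v, B u v) = 0"
        unfolding btens2_def by simp
    qed
  qed
  also have "\<dots> = complex_of_real (r u v) * btens2 (A u v) (B u v) (A u v, B u v)"
  proof (rule sum_single[OF finP assms(2)])
    fix x assume x: "x \<in> P" "x \<noteq> v"
    show "complex_of_real (r u x) * btens2 (A u x) (B u x) (A u v, B u v) = 0"
    proof -
      have "B u x \<noteq> B u v" using fp_B[OF assms(1) x(1)] fp_B[OF assms] x(2) by metis
      then show ?thesis unfolding btens2_def by simp
    qed
  qed
  finally show ?thesis unfolding btens2_def by simp
qed

lemma R_nz: assumes "R k \<noteq> 0" shows "\<exists>u\<in>P. \<exists>v\<in>P. k = (A u v, B u v)"
proof -
  from assms obtain u where u: "u \<in> P" "(\<Sum>v\<in>P. complex_of_real (r u v) * btens2 (A u v) (B u v) k) \<noteq> 0"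
    unfolding R_expand by (meson sum.not_neutral_contains_not_neutral)
  then obtain v where "v \<in> P" "complex_of_real (r u v) * btens2 (A u v) (B u v) k \<noteq> 0"
    by (meson sum.not_neutral_contains_not_neutral)
  then show ?thesis using u unfolding btens2_def by (auto split: if_splits)
qed

lemma R_nz_val: assumes "R (a,b) \<noteq> 0" shows "R (a,b) = complex_of_real (r (fp G P M a) (fp G P M b))"
  using R_nz[OF assms] R_val fp_A fp_B by auto

end

lemma sum6_single:
  fixes F :: "'a \<Rightarrow> 'a \<Rightarrow> 'a \<Rightarrow> 'a \<Rightarrow> 'a \<Rightarrow> 'a \<Rightarrow> 'c::comm_monoid_add"
  assumes S: "finite S" and a: "a1 \<in> S" "a2 \<in> S" "a3 \<in> S" "a4 \<in> S" "a5 \<in> S" "a6 \<in> S"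
    and H: "\<And>x1 x2 x3 x4 x5 x6. x1 \<in> S \<Longrightarrow> x2 \<in> S \<Longrightarrow> x3 \<in> S \<Longrightarrow> x4 \<in> S \<Longrightarrow> x5 \<in> S \<Longrightarrow> x6 \<in> S \<Longrightarrow>
       F x1 x2 x3 x4 x5 x6 \<noteq> 0 \<Longrightarrow> x1 = a1 \<and> x2 = a2 \<and> x3 = a3 \<and> x4 = a4 \<and> x5 = a5 \<and> x6 = a6"
  shows "(\<Sum>x1\<in>S. \<Sum>x2\<in>S. \<Sum>x3\<in>S. \<Sum>x4\<in>S. \<Sum>x5\<in>S. \<Sum>x6\<in>S. F x1 x2 x3 x4 x5 x6) = F a1 a2 a3 a4 a5 a6"
proof -
  have Z: "F x1 x2 x3 x4 x5 x6 = 0" if "x1 \<in> S" "x2 \<in> S" "x3 \<in> S" "x4 \<in> S" "x5 \<in> S" "x6 \<in> S"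
    "\<not> (x1 = a1 \<and> x2 = a2 \<and> x3 = a3 \<and> x4 = a4 \<and> x5 = a5 \<and> x6 = a6)" for x1 x2 x3 x4 x5 x6
    using H that by blast
  have "(\<Sum>x1\<in>S. \<Sum>x2\<in>S. \<Sum>x3\<in>S. \<Sum>x4\<in>S. \<Sum>x5\<in>S. \<Sum>x6\<in>S. F x1 x2 x3 x4 x5 x6)
      = (\<Sum>x2\<in>S. \<Sum>x3\<in>S. \<Sum>x4\<in>S. \<Sum>x5\<in>S. \<Sum>x6\<in>S. F a1 x2 x3 x4 x5 x6)"
    by (rule sum_single[OF S a(1)], intro sum.neutral ballI Z) auto
  also have "\<dots> = (\<Sum>x3\<in>S. \<Sum>x4\<in>S. \<Sum>x5\<in>S. \<Sum>x6\<in>S. F a1 a2 x3 x4 x5 x6)"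
    by (rule sum_single[OF S a(2)], intro sum.neutral ballI Z) (use a in auto)
  also have "\<dots> = (\<Sum>x4\<in>S. \<Sum>x5\<in>S. \<Sum>x6\<in>S. F a1 a2 a3 x4 x5 x6)"
    by (rule sum_single[OF S a(3)], intro sum.neutral ballI Z) (use a in auto)
  also have "\<dots> = (\<Sum>x5\<in>S. \<Sum>x6\<in>S. F a1 a2 a3 a4 x5 x6)"
    by (rule sum_single[OF S a(4)], intro sum.neutral ballI Z) (use a in auto)
  also have "\<dots> = (\<Sum>x6\<in>S. F a1 a2 a3 a4 a5 x6)"
    by (rule sum_single[OF S a(5)], intro sum.neutral ballI Z) (use a in auto)
  also have "\<dots> = F a1 a2 a3 a4 a5 a6"
    by (rule sum_single[OF S a(6)], intro Z) (use a in auto)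
  finally show ?thesis .
qed

lemma mcoef_nz: "mcoef G P M g h k \<noteq> 0 \<Longrightarrow> ract_pm G P M (fp G P M g) (fm G P M g) = fp G P M h \<and> k = g \<otimes>\<^bsub>G\<^esub> fm G P M h"
  unfolding mcoef_def by (auto split: if_splits)
lemma mcoef_one: "mcoef G P M g h k \<noteq> 0 \<Longrightarrow> mcoef G P M g h k = 1"
  unfolding mcoef_def by (auto split: if_splits)
lemma hunit_nz: "hunit P g \<noteq> 0 \<Longrightarrow> g \<in> P"
  unfolding hunit_def by (auto split: if_splits)
lemma hunit_one: "hunit P g \<noteq> 0 \<Longrightarrow> hunit P g = 1"
  unfolding hunit_def by (auto split: if_splits)

context rsetup begin

lemma dcoef_nz: "dcoef G P M g k1 k2 \<noteq> 0 \<Longrightarrow> \<exists>h\<in>P. k1 = fp G P M g \<otimes> inv h \<otimes> lact_pm G P M h (fm G P M g)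
         \<and> k2 = h \<otimes> fm G P M g"
proof -
  assume "dcoef G P M g k1 k2 \<noteq> 0"
  then obtain h where h: "h \<in> P" "(if k1 = fp G P M g \<otimes> inv h \<otimes> lact_pm G P M h (fm G P M g)
         \<and> k2 = h \<otimes> fm G P M g then 1 else 0) \<noteq> (0::complex)"
    unfolding dcoef_def by (rule sum.not_neutral_contains_not_neutral)
  from h(2) have "k1 = fp G P M g \<otimes> inv h \<otimes> lact_pm G P M h (fm G P M g) \<and> k2 = h \<otimes> fm G P M g"
    by (simp split: if_splits)
  then show ?thesis using h(1) by blast
qed

lemma dcoef_val: assumes "h \<in> P" "g \<in> carrier G"
  shows "dcoef G P M g (fp G P M g \<otimes> inv h \<otimes> lact_pm G P M h (fm G P M g)) (h \<otimes> fm G P M g) = 1"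
proof -
  have "dcoef G P M g (fp G P M g \<otimes> inv h \<otimes> lact_pm G P M h (fm G P M g)) (h \<otimes> fm G P M g)
     = (if fp G P M g \<otimes> inv h \<otimes> lact_pm G P M h (fm G P M g) = fp G P M g \<otimes> inv h \<otimes> lact_pm G P M h (fm G P M g)
         \<and> h \<otimes> fm G P M g = h \<otimes> fm G P M g then 1 else 0)"
    unfolding dcoef_def
  proof (rule sum_single[OF finP assms(1)])
    fix x assume x: "x \<in> P" "x \<noteq> h"
    have "h \<otimes> fm G P M g \<noteq> x \<otimes> fm G P M g"
    proof
      assume "h \<otimes> fm G P M g = x \<otimes> fm G P M g"
      then have "h = x" using fac_uniq[OF assms(1) x(1) fm_in[OF assms(2)] fm_in[OF assms(2)]] by blast
      then show False using x(2) by simp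
    qed
    then show "(if fp G P M g \<otimes> inv h \<otimes> lact_pm G P M h (fm G P M g) = fp G P M g \<otimes> inv x \<otimes> lact_pm G P M x (fm G P M g)
         \<and> h \<otimes> fm G P M g = x \<otimes> fm G P M g then 1 else 0) = (0::complex)" by auto
  qed
  then show ?thesis by simp
qed

end

context rsetup begin

lemma ident_II:
  assumes qt2: "(\<lambda>(k1,k2,k3). \<Sum>g\<in>carrier G. R (k1,g) * dcoef G P M g k2 k3)
        = mul3 G P M (\<lambda>(k1,k2,k3). R (k1,k3) * hunit P k2) (\<lambda>(k1,k2,k3). R (k1,k2) * hunit P k3)"
    and u: "u \<in> P" and v: "v \<in> P" and k: "k \<in> P"
  shows "ract_pm G P M u (am u k) \<in> P \<and> r u v = r u k * r (ract_pm G P M u (am u k)) (v \<otimes> inv k)"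
proof -
  define l where "l = lact_pm G P M k (\<xi> u)"
  define k1 where "k1 = A u v"
  define k2 where "k2 = v \<otimes> inv k \<otimes> l"
  define k3 where "k3 = B u k"
  define w where "w = ract_pm G P M u (am u k)"
  define v2 where "v2 = v \<otimes> inv k"
  have l: "l \<in> M" unfolding l_def using lact_pm_in[OF k xi_in[OF u]] .
  have v2: "v2 \<in> P" unfolding v2_def using P_mult[OF v P_inv[OF k]] .
  have w: "w \<in> P" unfolding w_def using ract_pm_in[OF u am_in[OF u k]] .
  have k2': "k2 = v2 \<otimes> l" unfolding k2_def v2_def ..
  have k3': "k3 = k \<otimes> \<xi> u" unfolding k3_def B_def ..
  have c: "k1 \<in> carrier G" "k2 \<in> carrier G" "k3 \<in> carrier G"
    unfolding k1_def k2' k3_def using A_car[OF u v] m_closed[OF P_car[OF v2] M_car[OF l]] B_car[OF u k] by auto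
  have fpk2: "fp G P M k2 = v2" unfolding k2' using fp_eq[OF v2 l] .
  have fpk3: "fp G P M k3 = k" and fmk3: "fm G P M k3 = \<xi> u" unfolding k3_def using fp_B[OF u k] fm_B[OF u k] by auto
  have L: "(\<Sum>g\<in>carrier G. R (k1,g) * dcoef G P M g k2 k3) = R (k1, B u v) * dcoef G P M (B u v) k2 k3"
  proof (rule sum_single[OF fin B_car[OF u v]])
    fix g assume g: "g \<in> carrier G" "g \<noteq> B u v"
    show "R (k1,g) * dcoef G P M g k2 k3 = 0"
    proof (rule ccontr)
      assume "R (k1,g) * dcoef G P M g k2 k3 \<noteq> 0"
      then have n1: "R (k1,g) \<noteq> 0" and n2: "dcoef G P M g k2 k3 \<noteq> 0" by auto
      obtain u1 v1 where uv1: "u1 \<in> P" "v1 \<in> P" "k1 = A u1 v1" "g = B u1 v1" using R_nz[OF n1] by blast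
      have u1u: "u1 = u" using uv1(3) fp_A[OF uv1(1,2)] fp_A[OF u v] unfolding k1_def by simp
      obtain h where h: "h \<in> P" "k2 = fp G P M g \<otimes> inv h \<otimes> lact_pm G P M h (fm G P M g)"
        "k3 = h \<otimes> fm G P M g" using dcoef_nz[OF n2] by blast
      have fg: "fp G P M g = v1" "fm G P M g = \<xi> u" using uv1(4) fp_B[OF uv1(1,2)] fm_B[OF uv1(1,2)] u1u by auto
      have "h \<otimes> \<xi> u = k \<otimes> \<xi> u" using h(3) fg(2) k3' by simp
      then have hk: "h = k" using fac_uniq[OF h(1) k xi_in[OF u] xi_in[OF u]] by blast
      have "v1 \<otimes> inv k \<otimes> l = v \<otimes> inv k \<otimes> l" using h(2) fg hk unfolding l_def k2_def by simp
      then have "v1 = v" using P_car[OF uv1(2)] P_car[OF v] inv_closed[OF P_car[OF k]] M_car[OF l] by simp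
      then show False using g(2) uv1(4) u1u by simp
    qed
  qed
  also have "\<dots> = complex_of_real (r u v)"
  proof -
    have "dcoef G P M (B u v) k2 k3 = 1"
      using dcoef_val[OF k B_car[OF u v]] unfolding fp_B[OF u v] fm_B[OF u v] k2_def k3' l_def .
    then show ?thesis using R_val[OF u v] unfolding k1_def by simp
  qed
  finally have Lv: "(\<Sum>g\<in>carrier G. R (k1,g) * dcoef G P M g k2 k3) = complex_of_real (r u v)" .
  define F where "F = (\<lambda>g1 g2 g3 h1 h2 h3. R (g1, g3) * hunit P g2 * (R (h1, h2) * hunit P h3) *
       mcoef G P M g1 h1 k1 * mcoef G P M g2 h2 k2 * mcoef G P M g3 h3 k3)"
  have Rexp: "mul3 G P M (\<lambda>(k1,k2,k3). R (k1,k3) * hunit P k2) (\<lambda>(k1,k2,k3). R (k1,k2) * hunit P k3) (k1,k2,k3)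
      = (\<Sum>g1\<in>carrier G. \<Sum>g2\<in>carrier G. \<Sum>g3\<in>carrier G. \<Sum>h1\<in>carrier G. \<Sum>h2\<in>carrier G. \<Sum>h3\<in>carrier G.
          F g1 g2 g3 h1 h2 h3)"
    unfolding mul3_def F_def by simp
  define h3' where "h3' = ract_pm G P M k (\<xi> u)"
  have h3': "h3' \<in> P" unfolding h3'_def using ract_pm_in[OF k xi_in[OF u]] .
  have nzF: "g1 = A u k \<and> g2 = v2 \<and> g3 = k3 \<and> h1 = A w v2 \<and> h2 = k2 \<and> h3 = h3'"
    if cs: "g1 \<in> carrier G" "g2 \<in> carrier G" "g3 \<in> carrier G" "h1 \<in> carrier G" "h2 \<in> carrier G" "h3 \<in> carrier G"
     and nz: "F g1 g2 g3 h1 h2 h3 \<noteq> 0" for g1 g2 g3 h1 h2 h3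
  proof -
    from nz have n: "R (g1,g3) \<noteq> 0" "hunit P g2 \<noteq> 0" "R (h1,h2) \<noteq> 0" "hunit P h3 \<noteq> 0"
      "mcoef G P M g1 h1 k1 \<noteq> 0" "mcoef G P M g2 h2 k2 \<noteq> 0" "mcoef G P M g3 h3 k3 \<noteq> 0"
      unfolding F_def by auto
    have g2: "g2 \<in> P" using hunit_nz[OF n(2)] .
    have h3: "h3 \<in> P" using hunit_nz[OF n(4)] .
    have mc2: "ract_pm G P M (fp G P M g2) (fm G P M g2) = fp G P M h2" "k2 = g2 \<otimes> fm G P M h2"
      using mcoef_nz[OF n(6)] by auto
    have "ract_pm G P M (fp G P M g2) (fm G P M g2) = g2"
      by (simp only: fp_P[OF g2] fm_P[OF g2] ract_pm_one[OF g2])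
    then have g2h2: "g2 = fp G P M h2" using mc2(1) by simp
    have e2a: "h2 = k2" using mc2(2) fpm[OF cs(5)] g2h2 by simp
    have e2b: "g2 = v2" using g2h2 e2a fpk2 by simp
    have mc3: "ract_pm G P M (fp G P M g3) (fm G P M g3) = fp G P M h3" "k3 = g3 \<otimes> fm G P M h3"
      using mcoef_nz[OF n(7)] by auto
    have e3a: "g3 = k3" using mc3(2) fm_P[OF h3] r_one[OF cs(3)] by simp
    have e3b: "h3 = h3'" using mc3(1) fp_P[OF h3] e3a fpk3 fmk3 unfolding h3'_def by simp
    obtain u1 v1 where uv1: "u1 \<in> P" "v1 \<in> P" "g1 = A u1 v1" "g3 = B u1 v1" using R_nz[OF n(1)] by blast
    obtain u2 v2' where uv2: "u2 \<in> P" "v2' \<in> P" "h1 = A u2 v2'" "h2 = B u2 v2'" using R_nz[OF n(3)] by blast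
    have v1k: "v1 = k" using fp_B[OF uv1(1,2)] uv1(4) e3a fpk3 by simp
    have v2v2: "v2' = v2" using fp_B[OF uv2(1,2)] uv2(4) e2a fpk2 by simp
    have mc1: "ract_pm G P M (fp G P M g1) (fm G P M g1) = fp G P M h1" "k1 = g1 \<otimes> fm G P M h1"
      using mcoef_nz[OF n(5)] by auto
    have m1a: "ract_pm G P M u1 (am u1 k) = u2"
      using mc1(1) fp_A[OF uv1(1,2)] fm_A[OF uv1(1,2)] fp_A[OF uv2(1,2)] uv1(3) uv2(3) v1k by simp
    have m1b: "k1 = A u1 k \<otimes> am u2 v2"
      using mc1(2) fm_A[OF uv2(1,2)] uv1(3) uv2(3) v1k v2v2 by simp
    have amc: "am u1 k \<in> M" "am u2 v2 \<in> M" using am_in uv1(1) uv2(1) k v2 by auto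
    have "u \<otimes> am u v = u1 \<otimes> (am u1 k \<otimes> am u2 v2)"
      using m1b unfolding k1_def A_def using P_car[OF uv1(1)] M_car[OF amc(1)] M_car[OF amc(2)] by (simp add: m_assoc)
    then have u1u: "u1 = u" using fac_uniq[OF u uv1(1) am_in[OF u v] M_mult[OF amc]] by blast
    have "g1 = A u k" using uv1(3) u1u v1k by simp
    moreover have "h1 = A w v2" using uv2(3) m1a u1u v2v2 unfolding w_def by simp
    ultimately show ?thesis using e2a e2b e3a e3b by simp
  qed
  have Rv: "mul3 G P M (\<lambda>(k1,k2,k3). R (k1,k3) * hunit P k2) (\<lambda>(k1,k2,k3). R (k1,k2) * hunit P k3) (k1,k2,k3)
       = F (A u k) v2 k3 (A w v2) k2 h3'"
    unfolding Rexp
    apply (rule sum6_single[OF fin A_car[OF u k] P_car[OF v2] c(3) A_car[OF w v2] c(2) P_car[OF h3']])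
    apply (rule nzF)
    apply assumption+
    done
  have eq0: "(\<Sum>g\<in>carrier G. R (k1,g) * dcoef G P M g k2 k3)
     = mul3 G P M (\<lambda>(k1,k2,k3). R (k1,k3) * hunit P k2) (\<lambda>(k1,k2,k3). R (k1,k2) * hunit P k3) (k1,k2,k3)"
    using fun_cong[OF qt2, of "(k1,k2,k3)"] by (simp only: prod.case)
  have eq: "F (A u k) v2 k3 (A w v2) k2 h3' = complex_of_real (r u v)"
    using eq0 Lv Rv by simp
  have "r u v > 0" using rpos u v by blast
  then have nz: "F (A u k) v2 k3 (A w v2) k2 h3' \<noteq> 0" using eq by simp
  have n: "R (A u k, k3) \<noteq> 0" "hunit P v2 \<noteq> 0" "R (A w v2, k2) \<noteq> 0" "hunit P h3' \<noteq> 0"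
      "mcoef G P M (A u k) (A w v2) k1 \<noteq> 0" "mcoef G P M v2 k2 k2 \<noteq> 0" "mcoef G P M k3 h3' k3 \<noteq> 0"
      using nz unfolding F_def by simp_all
  have "F (A u k) v2 k3 (A w v2) k2 h3' = R (A u k, k3) * hunit P v2 * (R (A w v2, k2) * hunit P h3') *
       mcoef G P M (A u k) (A w v2) k1 * mcoef G P M v2 k2 k2 * mcoef G P M k3 h3' k3"
    unfolding F_def ..
  also have "\<dots> = complex_of_real (r u k) * complex_of_real (r w v2)"
    unfolding hunit_one[OF n(2)] hunit_one[OF n(4)] mcoef_one[OF n(5)] mcoef_one[OF n(6)] mcoef_one[OF n(7)]
      R_nz_val[OF n(3)] fp_A[OF w v2] fpk2
    unfolding k3_def R_val[OF u k] by simp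
  finally have "complex_of_real (r u v) = complex_of_real (r u k * r w v2)" using eq by simp
  then have "r u v = r u k * r w v2" using of_real_eq_iff by blast
  then show ?thesis using w unfolding w_def v2_def by simp
qed

end

lemma prod_reindex_endo:
  assumes "finite S" "inj_on f S" "f ` S \<subseteq> S"
  shows "(\<Prod>x\<in>S. g (f x)) = (\<Prod>x\<in>S. g x)"
proof -
  have "f ` S = S" using endo_inj_surj assms by blast
  then have "(\<Prod>x\<in>S. g x) = (\<Prod>x\<in>f ` S. g x)" by simp
  also have "\<dots> = (\<Prod>x\<in>S. g (f x))" using prod.reindex[OF assms(2)] by simp
  finally show ?thesis by simp
qed

context rsetup begin

lemma ident_I:
  assumes qt1: "(\<lambda>(k1,k2,k3). \<Sum>g\<in>carrier G. R (g,k3) * dcoef G P M g k1 k2)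
        = mul3 G P M (\<lambda>(k1,k2,k3). R (k1,k3) * hunit P k2) (\<lambda>(k1,k2,k3). hunit P k1 * R (k2,k3))"
    and u: "u \<in> P" and h: "h \<in> P" and v: "v \<in> P"
  shows "r u v = r (u \<otimes> inv h) v * r h (ract_pm G P M v (\<xi> (u \<otimes> inv h)))"
proof -
  define l where "l = lact_pm G P M h (am u v)"
  define w where "w = u \<otimes> inv h"
  define k1 where "k1 = w \<otimes> l"
  define k2 where "k2 = h \<otimes> am u v"
  define k3 where "k3 = B u v"
  define v2 where "v2 = ract_pm G P M v (\<xi> w)"
  have amuv: "am u v \<in> M" using am_in[OF u v] .
  have l: "l \<in> M" unfolding l_def using lact_pm_in[OF h amuv] .
  have w: "w \<in> P" unfolding w_def using P_mult[OF u P_inv[OF h]] .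
  have v2: "v2 \<in> P" unfolding v2_def using ract_pm_in[OF v xi_in[OF w]] .
  have c: "k1 \<in> carrier G" "k2 \<in> carrier G" "k3 \<in> carrier G"
    unfolding k1_def k2_def k3_def
    using m_closed[OF P_car[OF w] M_car[OF l]] m_closed[OF P_car[OF h] M_car[OF amuv]] B_car[OF u v] by auto
  have fpk1: "fp G P M k1 = w" unfolding k1_def using fp_eq[OF w l] .
  have fmk1: "fm G P M k1 = l" unfolding k1_def using fm_eq[OF w l] .
  have fpk2: "fp G P M k2 = h" unfolding k2_def using fp_eq[OF h amuv] .
  have fpk3: "fp G P M k3 = v" unfolding k3_def using fp_B[OF u v] .
  have k1': "k1 = u \<otimes> inv h \<otimes> l" unfolding k1_def w_def ..
  have k3': "k3 = v \<otimes> \<xi> u" unfolding k3_def B_def ..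
  have L: "(\<Sum>g\<in>carrier G. R (g,k3) * dcoef G P M g k1 k2) = R (A u v, k3) * dcoef G P M (A u v) k1 k2"
  proof (rule sum_single[OF fin A_car[OF u v]])
    fix g assume g: "g \<in> carrier G" "g \<noteq> A u v"
    show "R (g,k3) * dcoef G P M g k1 k2 = 0"
    proof (rule ccontr)
      assume "R (g,k3) * dcoef G P M g k1 k2 \<noteq> 0"
      then have n1: "R (g,k3) \<noteq> 0" and n2: "dcoef G P M g k1 k2 \<noteq> 0" by auto
      obtain u1 v1 where uv1: "u1 \<in> P" "v1 \<in> P" "g = A u1 v1" "k3 = B u1 v1" using R_nz[OF n1] by blast
      have v1v: "v1 = v" using uv1(4) fp_B[OF uv1(1,2)] fpk3 by simp
      obtain h' where h': "h' \<in> P" "k1 = fp G P M g \<otimes> inv h' \<otimes> lact_pm G P M h' (fm G P M g)"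
        "k2 = h' \<otimes> fm G P M g" using dcoef_nz[OF n2] by blast
      have fg: "fp G P M g = u1" "fm G P M g = am u1 v" using uv1(3) fp_A[OF uv1(1,2)] fm_A[OF uv1(1,2)] v1v by auto
      have "h \<otimes> am u v = h' \<otimes> am u1 v" using h'(3) fg(2) unfolding k2_def by simp
      then have hh: "h = h' \<and> am u v = am u1 v" using fac_uniq[OF h h'(1) amuv am_in[OF uv1(1) v]] by blast
      have "u1 \<otimes> inv h \<otimes> l = u \<otimes> inv h \<otimes> l" using h'(2) fg hh k1' unfolding l_def by simp
      then have "u1 = u" using P_car[OF uv1(1)] P_car[OF u] inv_closed[OF P_car[OF h]] M_car[OF l] by simp
      then show False using g(2) uv1(3) v1v by simp
    qed
  qed
  also have "\<dots> = complex_of_real (r u v)"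
  proof -
    have "dcoef G P M (A u v) k1 k2 = 1"
      using dcoef_val[OF h A_car[OF u v]] unfolding fp_A[OF u v] fm_A[OF u v] k1' k2_def l_def .
    then show ?thesis using R_val[OF u v] unfolding k3_def by simp
  qed
  finally have Lv: "(\<Sum>g\<in>carrier G. R (g,k3) * dcoef G P M g k1 k2) = complex_of_real (r u v)" .
  define F where "F = (\<lambda>g1 g2 g3 h1 h2 h3. R (g1, g3) * hunit P g2 * (hunit P h1 * R (h2, h3)) *
       mcoef G P M g1 h1 k1 * mcoef G P M g2 h2 k2 * mcoef G P M g3 h3 k3)"
  have Rexp: "mul3 G P M (\<lambda>(k1,k2,k3). R (k1,k3) * hunit P k2) (\<lambda>(k1,k2,k3). hunit P k1 * R (k2,k3)) (k1,k2,k3)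
      = (\<Sum>g1\<in>carrier G. \<Sum>g2\<in>carrier G. \<Sum>g3\<in>carrier G. \<Sum>h1\<in>carrier G. \<Sum>h2\<in>carrier G. \<Sum>h3\<in>carrier G.
          F g1 g2 g3 h1 h2 h3)"
    unfolding mul3_def F_def by simp
  define h1' where "h1' = ract_pm G P M w l"
  have h1': "h1' \<in> P" unfolding h1'_def using ract_pm_in[OF w l] .
  have nzF: "g1 = k1 \<and> g2 = h \<and> g3 = B w v \<and> h1 = h1' \<and> h2 = k2 \<and> h3 = B h v2"
    if cs: "g1 \<in> carrier G" "g2 \<in> carrier G" "g3 \<in> carrier G" "h1 \<in> carrier G" "h2 \<in> carrier G" "h3 \<in> carrier G"
     and nz: "F g1 g2 g3 h1 h2 h3 \<noteq> 0" for g1 g2 g3 h1 h2 h3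
  proof -
    from nz have n: "R (g1,g3) \<noteq> 0" "hunit P g2 \<noteq> 0" "R (h2,h3) \<noteq> 0" "hunit P h1 \<noteq> 0"
      "mcoef G P M g1 h1 k1 \<noteq> 0" "mcoef G P M g2 h2 k2 \<noteq> 0" "mcoef G P M g3 h3 k3 \<noteq> 0"
      unfolding F_def by simp_all
    have g2: "g2 \<in> P" using hunit_nz[OF n(2)] .
    have h1: "h1 \<in> P" using hunit_nz[OF n(4)] .
    have mc2: "ract_pm G P M (fp G P M g2) (fm G P M g2) = fp G P M h2" "k2 = g2 \<otimes> fm G P M h2"
      using mcoef_nz[OF n(6)] by auto
    have "ract_pm G P M (fp G P M g2) (fm G P M g2) = g2"
      by (simp only: fp_P[OF g2] fm_P[OF g2] ract_pm_one[OF g2])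
    then have g2h2: "g2 = fp G P M h2" using mc2(1) by simp
    have e2a: "h2 = k2" using mc2(2) fpm[OF cs(5)] g2h2 by simp
    have e2b: "g2 = h" using g2h2 e2a fpk2 by simp
    have mc1: "ract_pm G P M (fp G P M g1) (fm G P M g1) = fp G P M h1" "k1 = g1 \<otimes> fm G P M h1"
      using mcoef_nz[OF n(5)] by auto
    have e1a: "g1 = k1" using mc1(2) fm_P[OF h1] r_one[OF cs(1)] by simp
    have e1b: "h1 = h1'" using mc1(1) fp_P[OF h1] e1a fpk1 fmk1 unfolding h1'_def by simp
    obtain u1 v1 where uv1: "u1 \<in> P" "v1 \<in> P" "g1 = A u1 v1" "g3 = B u1 v1" using R_nz[OF n(1)] by blast
    obtain u2 v2' where uv2: "u2 \<in> P" "v2' \<in> P" "h2 = A u2 v2'" "h3 = B u2 v2'" using R_nz[OF n(3)] by blast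
    have u1w: "u1 = w" using fp_A[OF uv1(1,2)] uv1(3) e1a fpk1 by simp
    have u2h: "u2 = h" using fp_A[OF uv2(1,2)] uv2(3) e2a fpk2 by simp
    have mc3: "ract_pm G P M (fp G P M g3) (fm G P M g3) = fp G P M h3" "k3 = g3 \<otimes> fm G P M h3"
      using mcoef_nz[OF n(7)] by auto
    have m3a: "ract_pm G P M v1 (\<xi> w) = v2'"
      using mc3(1) fp_B[OF uv1(1,2)] fm_B[OF uv1(1,2)] fp_B[OF uv2(1,2)] uv1(4) uv2(4) u1w by simp
    have m3b: "k3 = B w v1 \<otimes> \<xi> h"
      using mc3(2) fm_B[OF uv2(1,2)] uv1(4) uv2(4) u1w u2h by simp
    have xc: "\<xi> w \<in> M" "\<xi> h \<in> M" using xi_in[OF w] xi_in[OF h] by auto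
    have "v \<otimes> \<xi> u = v1 \<otimes> (\<xi> w \<otimes> \<xi> h)"
      using m3b unfolding k3' B_def using P_car[OF uv1(2)] M_car[OF xc(1)] M_car[OF xc(2)] by (simp add: m_assoc)
    then have v1v: "v1 = v" using fac_uniq[OF v uv1(2) xi_in[OF u] M_mult[OF xc]] by blast
    have "g3 = B w v" using uv1(4) u1w v1v by simp
    moreover have "h3 = B h v2" using uv2(4) m3a u2h v1v unfolding v2_def by simp
    ultimately show ?thesis using e1a e1b e2a e2b by simp
  qed
  have Rv: "mul3 G P M (\<lambda>(k1,k2,k3). R (k1,k3) * hunit P k2) (\<lambda>(k1,k2,k3). hunit P k1 * R (k2,k3)) (k1,k2,k3)
       = F k1 h (B w v) h1' k2 (B h v2)"
    unfolding Rexp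
    apply (rule sum6_single[OF fin c(1) P_car[OF h] B_car[OF w v] P_car[OF h1'] c(2) B_car[OF h v2]])
    apply (rule nzF)
    apply assumption+
    done
  have eq0: "(\<Sum>g\<in>carrier G. R (g,k3) * dcoef G P M g k1 k2)
     = mul3 G P M (\<lambda>(k1,k2,k3). R (k1,k3) * hunit P k2) (\<lambda>(k1,k2,k3). hunit P k1 * R (k2,k3)) (k1,k2,k3)"
    using fun_cong[OF qt1, of "(k1,k2,k3)"] by (simp only: prod.case)
  have eq: "F k1 h (B w v) h1' k2 (B h v2) = complex_of_real (r u v)"
    using eq0 Lv Rv by simp
  have "r u v > 0" using rpos u v by blast
  then have nz: "F k1 h (B w v) h1' k2 (B h v2) \<noteq> 0" using eq by simp
  have n: "R (k1, B w v) \<noteq> 0" "hunit P h \<noteq> 0" "R (k2, B h v2) \<noteq> 0" "hunit P h1' \<noteq> 0"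
      "mcoef G P M k1 h1' k1 \<noteq> 0" "mcoef G P M h k2 k2 \<noteq> 0" "mcoef G P M (B w v) (B h v2) k3 \<noteq> 0"
      using nz unfolding F_def by simp_all
  have "F k1 h (B w v) h1' k2 (B h v2) = R (k1, B w v) * hunit P h * (hunit P h1' * R (k2, B h v2)) *
       mcoef G P M k1 h1' k1 * mcoef G P M h k2 k2 * mcoef G P M (B w v) (B h v2) k3"
    unfolding F_def ..
  also have "\<dots> = complex_of_real (r w v) * complex_of_real (r h v2)"
    unfolding hunit_one[OF n(2)] hunit_one[OF n(4)] mcoef_one[OF n(5)] mcoef_one[OF n(6)] mcoef_one[OF n(7)]
      R_nz_val[OF n(1)] R_nz_val[OF n(3)] fpk1 fpk2 fp_B[OF w v] fp_B[OF h v2] by simp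
  finally have "complex_of_real (r u v) = complex_of_real (r w v * r h v2)" using eq by simp
  then have "r u v = r w v * r h v2" using of_real_eq_iff by blast
  then show ?thesis unfolding w_def v2_def by simp
qed

end

context rsetup begin

lemma final:
  assumes qt1: "(\<lambda>(k1,k2,k3). \<Sum>g\<in>carrier G. R (g,k3) * dcoef G P M g k1 k2)
        = mul3 G P M (\<lambda>(k1,k2,k3). R (k1,k3) * hunit P k2) (\<lambda>(k1,k2,k3). hunit P k1 * R (k2,k3))"
    and qt2: "(\<lambda>(k1,k2,k3). \<Sum>g\<in>carrier G. R (k1,g) * dcoef G P M g k2 k3)
        = mul3 G P M (\<lambda>(k1,k2,k3). R (k1,k3) * hunit P k2) (\<lambda>(k1,k2,k3). R (k1,k2) * hunit P k3)"
  shows "\<forall>u\<in>P. \<forall>v\<in>P. r u v = 1"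
proof -
  define n where "n = card P"
  have "P \<noteq> {}" using P_one by blast
  then have n: "n > 0" unfolding n_def using finP by (simp add: card_gt_0_iff)
  define D where "D u = (\<Prod>v\<in>P. r u v)" for u
  have Dpos: "D u > 0" if "u \<in> P" for u unfolding D_def
  proof (rule prod_pos)
    show "\<And>x. x \<in> P \<Longrightarrow> 0 < r u x" using rpos that by blast
  qed
  have pw1: "x = 1" if "x > 0" "x ^ n = 1" for x :: real
  proof -
    have "x ^ n = 1 ^ n" using that(2) by simp
    then show ?thesis using power_eq_iff_eq_base[OF n, of x 1] that(1) by simp
  qed
  have Dhom: "D (w \<otimes> h) = D w * D h" if w: "w \<in> P" and h: "h \<in> P" for w h
  proof -
    have wh: "w \<otimes> h \<in> P" using P_mult[OF w h] .
    have e: "w \<otimes> h \<otimes> inv h = w" using P_car[OF w] P_car[OF h] by (simp add: m_assoc)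
    have "D (w \<otimes> h) = (\<Prod>v\<in>P. r w v * r h (ract_pm G P M v (\<xi> w)))"
      unfolding D_def
    proof (rule prod.cong)
      fix v assume v: "v \<in> P"
      show "r (w \<otimes> h) v = r w v * r h (ract_pm G P M v (\<xi> w))"
        using ident_I[OF qt1 wh h v] unfolding e .
    qed simp
    also have "\<dots> = D w * (\<Prod>v\<in>P. r h (ract_pm G P M v (\<xi> w)))" unfolding D_def prod.distrib ..
    also have "(\<Prod>v\<in>P. r h (ract_pm G P M v (\<xi> w))) = D h" unfolding D_def
    proof (rule prod_reindex_endo[OF finP ract_pm_inj[OF xi_in[OF w]]])
      show "(\<lambda>v. ract_pm G P M v (\<xi> w)) ` P \<subseteq> P" using ract_pm_in[OF _ xi_in[OF w]] by blast
    qed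
    finally show ?thesis .
  qed
  have D1: "D h = 1" if h: "h \<in> P" for h
  proof -
    have A1: "(\<Prod>w\<in>P. D (w \<otimes> h)) = (\<Prod>w\<in>P. D w)"
    proof (rule prod_reindex_endo[OF finP])
      show "inj_on (\<lambda>w. w \<otimes> h) P"
      proof (rule inj_onI)
        fix x y assume "x \<in> P" "y \<in> P" "x \<otimes> h = y \<otimes> h"
        then show "x = y" using P_car[OF h] P_car[of x] P_car[of y] by simp
      qed
      show "(\<lambda>w. w \<otimes> h) ` P \<subseteq> P" using P_mult[OF _ h] by blast
    qed
    have "(\<Prod>w\<in>P. D (w \<otimes> h)) = (\<Prod>w\<in>P. D w * D h)"
      by (rule prod.cong) (simp_all add: Dhom h)
    also have "\<dots> = (\<Prod>w\<in>P. D w) * D h ^ n" unfolding prod.distrib n_def by simp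
    finally have A2: "(\<Prod>w\<in>P. D w) = (\<Prod>w\<in>P. D w) * D h ^ n" using A1 by simp
    have "(\<Prod>w\<in>P. D w) > 0" by (rule prod_pos) (use Dpos in blast)
    then have "D h ^ n = 1" using A2 by simp
    then show ?thesis using pw1 Dpos[OF h] by blast
  qed
  show ?thesis
  proof (intro ballI)
    fix u k assume u: "u \<in> P" and k: "k \<in> P"
    define c where "c = ract_pm G P M u (am u k)"
    have c: "c \<in> P" using ident_II[OF qt2 u k k] unfolding c_def by blast
    have "D u = (\<Prod>v\<in>P. r u k * r c (v \<otimes> inv k))"
      unfolding D_def
    proof (rule prod.cong)
      fix v assume v: "v \<in> P"
      show "r u v = r u k * r c (v \<otimes> inv k)" using ident_II[OF qt2 u v k] unfolding c_def by blast
    qed simp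
    also have "\<dots> = r u k ^ n * (\<Prod>v\<in>P. r c (v \<otimes> inv k))" unfolding n_def prod.distrib by simp
    also have "(\<Prod>v\<in>P. r c (v \<otimes> inv k)) = D c" unfolding D_def
    proof (rule prod_reindex_endo[OF finP])
      show "inj_on (\<lambda>v. v \<otimes> inv k) P"
      proof (rule inj_onI)
        fix x y assume "x \<in> P" "y \<in> P" "x \<otimes> inv k = y \<otimes> inv k"
        then show "x = y" using inv_closed[OF P_car[OF k]] P_car[of x] P_car[of y] by simp
      qed
      show "(\<lambda>v. v \<otimes> inv k) ` P \<subseteq> P" using P_mult[OF _ P_inv[OF k]] by blast
    qed
    finally have "r u k ^ n = 1" using D1[OF u] D1[OF c] by simp
    then show "r u k = 1" using pw1 rpos u k by blast
  qed
qed

end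

theorem proposition5:
  fixes G :: "('a,'b) monoid_scheme" and Gp Gm :: "'a set"
    and \<xi> \<eta> :: "'a \<Rightarrow> 'a" and r :: "'a \<Rightarrow> 'a \<Rightarrow> real"
    and R :: "'a \<times> 'a \<Rightarrow> complex"
  assumes "group G" and "finite (carrier G)"
    and "unique_factorization G Gp Gm"
    and "\<forall>u\<in>Gp. \<xi> u \<in> Gm" and "\<forall>u\<in>Gp. \<eta> u \<in> Gm"
    and "\<forall>u\<in>Gp. \<forall>v\<in>Gp. r u v > 0"
    and "R = (\<lambda>k. \<Sum>u\<in>Gp. \<Sum>v\<in>Gp. complex_of_real (r u v) *
            btens2 (u \<otimes>\<^bsub>G\<^esub> inv\<^bsub>G\<^esub> (ract_mp G Gp Gm (\<eta> v) u)) (v \<otimes>\<^bsub>G\<^esub> \<xi> u) k)"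
    and "quasi_triangular G Gp Gm R"
    and "positive2 R"
  shows "\<forall>u\<in>Gp. \<forall>v\<in>Gp. r u v = 1"
proof -
  have "rsetup G Gp Gm \<xi> \<eta> r R"
    by (intro rsetup.intro ufac.intro ufac_axioms.intro rsetup_axioms.intro assms(1-7))
  then interpret x: rsetup G Gp Gm \<xi> \<eta> r R .
  have q: "(\<lambda>(k1,k2,k3). \<Sum>g\<in>carrier G. R (g,k3) * dcoef G Gp Gm g k1 k2)
        = mul3 G Gp Gm (\<lambda>(k1,k2,k3). R (k1,k3) * hunit Gp k2) (\<lambda>(k1,k2,k3). hunit Gp k1 * R (k2,k3))"
    "(\<lambda>(k1,k2,k3). \<Sum>g\<in>carrier G. R (k1,g) * dcoef G Gp Gm g k2 k3)
        = mul3 G Gp Gm (\<lambda>(k1,k2,k3). R (k1,k3) * hunit Gp k2) (\<lambda>(k1,k2,k3). R (k1,k2) * hunit Gp k3)"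
    using assms(8) unfolding quasi_triangular_def by blast+
  show ?thesis using x.final[OF q(1) q(2)] .
qed

end
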